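(* Let $k$ be an odd positive integer and write $k=ff'$ with positive integers $f,f'$ such that $1<f<k$. If there exist coprime integers $x,y$ with $x^2-(k^2+1)y^2=f'^2$, then $f'$ is not a prime power (i.e. $f'$ is not of the form $p^a$ with $p$ prime and $a\ge 1$). *)

theory Defs
  imports "HOL-Computational_Algebra.Primes"
begin

end

theory Submission
  imports Defs
begin

lemma descent:
  fixes k :: int
  shows "k \<ge> 1 \<Longrightarrow> x^2 - (k^2+1)*y^2 = N \<Longrightarrow> coprime x y \<Longrightarrow> \<bar>N\<bar> \<le> k \<Longrightarrow> \<bar>N\<bar> = 1"
proof (induction "nat \<bar>y\<bar>" arbitrary: x y N rule: less_induct)
  case less
  show ?case
  proof (cases "y = 0")
    case True
    then have "is_unit x" using less.prems(3) by simp
    then have "\<bar>x\<bar> = 1" by simp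
    then have "x^2 = 1" by (metis power2_abs one_power2)
    then show ?thesis using less.prems(2) True by simp
  next
    case False
    define X where "X = \<bar>x\<bar>"
    define Y where "Y = \<bar>y\<bar>"
    have Y1: "Y \<ge> 1" using False Y_def by simp
    have X0: "X \<ge> 0" using X_def by simp
    have eq: "X^2 - (k^2+1)*Y^2 = N" using less.prems(2) X_def Y_def by simp
    have cop: "coprime X Y" using less.prems(3) X_def Y_def by simp
    define x' where "x' = (k^2+1)*Y - k*X"
    define y' where "y' = X - k*Y"
    have eq': "x'^2 - (k^2+1)*y'^2 = -N"
    proof -
      have "x'^2 - (k^2+1)*y'^2 = (k^2+1)*Y^2 - X^2"
        unfolding x'_def y'_def by (simp add: power2_eq_square algebra_simps)
      then show ?thesis using eq by simp
    qed
    have back1: "X = k*x' + (k^2+1)*y'" unfolding x'_def y'_def by (simp add: power2_eq_square algebra_simps)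
    have back2: "Y = x' + k*y'" unfolding x'_def y'_def by (simp add: power2_eq_square algebra_simps)
    have cop': "coprime x' y'"
    proof (rule coprimeI)
      fix c assume "c dvd x'" "c dvd y'"
      then have "c dvd X" "c dvd Y" using back1 back2 by auto
      then show "is_unit c" using cop coprime_common_divisor by blast
    qed
    have prod: "(X - k*Y)*(X + k*Y) = Y^2 + N" using eq by (simp add: power2_eq_square algebra_simps)
    have Nb: "\<bar>N\<bar> \<le> k" using less.prems(4) .
    have lt: "\<bar>y'\<bar> < Y"
    proof (cases "X \<ge> k*Y")
      case True
      show ?thesis
      proof (rule ccontr)
        assume "\<not> \<bar>y'\<bar> < Y"
        then have h: "X - k*Y \<ge> Y" using True y'_def by simp
        have "X + k*Y \<ge> 2*k*Y + Y" using h by linarith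
        have "(X - k*Y)*(X + k*Y) \<ge> Y*(2*k*Y+Y)"
          by (rule mult_mono) (use h \<open>X + k*Y \<ge> 2*k*Y + Y\<close> Y1 less.prems(1) mult_nonneg_nonneg[of k Y] in linarith)+
        moreover have "Y*(2*k*Y+Y) = 2*k*Y^2 + Y^2" by (simp add: power2_eq_square algebra_simps)
        moreover have "Y^2 \<ge> 1" using Y1 by (simp add: one_le_power)
        moreover have "k*Y^2 \<ge> k" using \<open>Y^2 \<ge> 1\<close> less.prems(1) by simp
        ultimately show False using prod Nb less.prems(1) by linarith
      qed
    next
      case False
      show ?thesis
      proof (rule ccontr)
        assume "\<not> \<bar>y'\<bar> < Y"
        then have h: "k*Y - X \<ge> Y" using False y'_def by simp
        have "(k*Y - X)*(k*Y + X) \<ge> Y*(k*Y)"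
          by (rule mult_mono) (use h X0 Y1 less.prems(1) in auto)
        moreover have "(k*Y - X)*(k*Y + X) = -(Y^2 + N)" using prod by (simp add: algebra_simps)
        moreover have "Y*(k*Y) = k*Y^2" by (simp add: power2_eq_square)
        moreover have "Y^2 \<ge> 1" using Y1 by (simp add: one_le_power)
        moreover have "k*Y^2 \<ge> k" using \<open>Y^2 \<ge> 1\<close> less.prems(1) by simp
        ultimately show False using Nb less.prems(1) by linarith
      qed
    qed
    have "nat \<bar>y'\<bar> < nat \<bar>y\<bar>" using lt Y_def by simp
    from less.hyps[OF this less.prems(1) eq' cop'] Nb have "\<bar>-N\<bar> = 1" by simp
    then show ?thesis by simp
  qed
qed

lemma helperB:
  fixes F F' x y :: int
  assumes F1: "1 < F" and FF: "F < F'"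
    and eq: "x^2 - ((F*F')^2+1)*y^2 = F'^2"
    and cop: "coprime x y" and dv: "F'^2 dvd (x - y)"
  shows False
proof -
  obtain m where m: "x - y = F'^2 * m" using dv by (auto simp: dvd_def)
  have xe: "x = F'^2 * m + y" using m by simp
  have "F'^2 * (F'^2*m^2 + 2*m*y - F^2*y^2) = F'^2 * 1"
    using eq unfolding xe by (simp add: power2_eq_square algebra_simps)
  moreover have "F'^2 \<noteq> 0" using F1 FF by simp
  ultimately have key: "F'^2*m^2 + 2*m*y - F^2*y^2 = 1" by simp
  define X where "X = F^2*y - m"
  define Y where "Y = m"
  have eqX: "X^2 - ((F*F')^2+1)*Y^2 = -(F^2)"
  proof -
    have "X^2 - ((F*F')^2+1)*Y^2 = -(F^2) * (F'^2*m^2 + 2*m*y - F^2*y^2)"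
      unfolding X_def Y_def by (simp add: power2_eq_square algebra_simps)
    then show ?thesis using key by simp
  qed
  have copX: "coprime X Y"
  proof (rule coprimeI)
    fix c assume c1: "c dvd X" and c2: "c dvd Y"
    then have "c dvd m" using Y_def by simp
    moreover have "c dvd F^2*y" using c1 \<open>c dvd m\<close> unfolding X_def
      by (metis diff_add_cancel dvd_add)
    ultimately have "c dvd (F'^2*m*m + 2*m*y) - (F^2*y)*y"
    proof -
      have "c dvd F'^2*m*m" using \<open>c dvd m\<close> by simp
      moreover have "c dvd 2*m*y" using \<open>c dvd m\<close> by simp
      moreover have "c dvd (F^2*y)*y" using \<open>c dvd F^2*y\<close> by simp
      ultimately show ?thesis by (simp add: dvd_add dvd_diff)
    qed
    then have "c dvd F'^2*m^2 + 2*m*y - F^2*y^2"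
      by (simp add: power2_eq_square mult.assoc)
    then show "is_unit c" using key by simp
  qed
  have "1*1 \<le> F*F'" by (rule mult_mono) (use F1 FF in auto)
  then have k1: "F*F' \<ge> 1" by simp
  have "\<bar>-(F^2)\<bar> \<le> F*F'" using F1 FF by (simp add: power2_eq_square)
  from descent[OF k1 eqX copX this] have "F^2 = 1" by simp
  then show False using F1 by (simp add: power2_eq_square) (smt (verit) mult_less_cancel_left2)
qed

theorem lemma3p3:
  fixes k f f' :: nat and x y :: int
  assumes "odd k" and "k > 0"
    and "k = f * f'" and "f > 0" and "f' > 0"
    and "1 < f" and "f < k"
    and "coprime x y"
    and "x^2 - (int k^2 + 1) * y^2 = (int f')^2"
  shows "\<not> (\<exists>p a. prime p \<and> a \<ge> 1 \<and> f' = p ^ a)"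
proof
  assume "\<exists>p a. prime p \<and> a \<ge> 1 \<and> f' = p ^ a"
  then obtain p a where p: "prime p" and a: "a \<ge> 1" and fp: "f' = p ^ a" by blast
  define F where "F = int f"
  define F' where "F' = int f'"
  have f'1: "f' > 1" proof (rule ccontr)
    assume "\<not> f' > 1"
    then have "f' = 1" using assms(5) by simp
    then show False using assms(3,7) by simp
  qed
  have eqI: "x^2 - ((F*F')^2+1)*y^2 = F'^2"
    using assms(9) assms(3) unfolding F_def F'_def by (simp add: power_mult_distrib)
  show False
  proof (cases "f' \<le> f")
    case True
    have k1: "F*F' \<ge> 1" using assms(2,3) unfolding F_def F'_def by (metis of_nat_mult of_nat_0_less_iff int_one_le_iff_zero_less)
    have "\<bar>F'^2\<bar> \<le> F*F'" using True unfolding F_def F'_def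
      by (simp add: power2_eq_square mult_right_mono)
    from descent[OF k1 eqI assms(8) this] have "F'^2 = 1" by simp
    then have "int f' * int f' = 1" unfolding F'_def by (simp add: power2_eq_square)
    then have "int (f' * f') = int 1" by simp
    then have "f' * f' = 1" by (simp only: of_nat_eq_iff)
    then have "f' = 1" by simp
    then show False using f'1 by simp
  next
    case False
    have FF: "F < F'" using False unfolding F_def F'_def by simp
    have F1: "1 < F" using assms unfolding F_def by simp
    have "p dvd f'" using fp a by (simp add: dvd_power)
    then have "p dvd k" using assms(3) by simp
    then have "odd p" using assms(1) dvd_trans by blast
    define P where "P = int p"
    have P: "prime P" using p P_def by simp
    have oP: "\<not> P dvd 2"
    proof
      assume "P dvd 2"
      then have "int p dvd int 2" using P_def by simp
      then have "p dvd 2" by (simp only: int_dvd_int_iff)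
      then have "p \<le> 2" by (rule dvd_imp_le) auto
      moreover have "p \<ge> 2" using p by (simp add: prime_ge_2_nat)
      ultimately have "p = 2" by simp
      then show False using \<open>odd p\<close> by simp
    qed
    have F'P: "F'^2 = P^(2*a)" unfolding F'_def P_def fp by (simp add: power_mult power_mult_distrib mult.commute)
    have prod: "(x-y)*(x+y) = F'^2*(F^2*y^2+1)"
      using eqI by (simp add: power2_eq_square algebra_simps)
    have notboth: "\<not> (P dvd x - y \<and> P dvd x + y)"
    proof
      assume h: "P dvd x - y \<and> P dvd x + y"
      then have "P dvd (x-y)+(x+y)" "P dvd (x+y)-(x-y)" by (blast intro: dvd_add dvd_diff)+
      moreover have "(x-y)+(x+y) = 2*x" "(x+y)-(x-y) = 2*y" by simp_all
      ultimately have "P dvd 2*x" "P dvd 2*y" by metis+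
      then have "P dvd x" "P dvd y" using P oP by (auto dest: prime_dvd_multD)
      then have "is_unit P" using assms(8) coprime_common_divisor by blast
      then show False using P not_prime_unit by blast
    qed
    have "P^(2*a) dvd (x-y)*(x+y)" using prod F'P by simp
    then have "F'^2 dvd x - y \<or> F'^2 dvd x + y"
    proof -
      assume d: "P^(2*a) dvd (x-y)*(x+y)"
      show ?thesis
      proof (cases "P dvd x - y")
        case True
        then have "\<not> P dvd x + y" using notboth by blast
        then have "coprime (P^(2*a)) (x+y)" using P by (simp add: prime_imp_coprime)
        then have "P^(2*a) dvd x - y" using d by (simp add: coprime_dvd_mult_left_iff)
        then show ?thesis using F'P by simp
      next
        case False
        then have "coprime (P^(2*a)) (x-y)" using P by (simp add: prime_imp_coprime)
        then have "P^(2*a) dvd x + y" using d by (simp add: coprime_dvd_mult_right_iff)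
        then show ?thesis using F'P by simp
      qed
    qed
    then show False
    proof
      assume "F'^2 dvd x - y"
      then show False using helperB[OF F1 FF eqI assms(8)] by simp
    next
      assume "F'^2 dvd x + y"
      moreover have "x^2 - ((F*F')^2+1)*(-y)^2 = F'^2" using eqI by simp
      moreover have "coprime x (-y)" using assms(8) by simp
      moreover have "x - (-y) = x + y" by simp
      ultimately show False using helperB[OF F1 FF, of x "-y"] by metis
    qed
  qed
qed

end
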